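(* Let $P$ be atomic. The sequent $\supset \Box(P\land\lnot\Box P\to P)\to\lnot\Box(P\land\lnot\Box P)$ has no prehistoric-cycle-free G3s proof.
   Context: S4 formulas built from atoms, $\bot$, $\to$, $\Box$, with $\lnot$ and $\land$ (handled either as abbreviations or by the standard G3 rules: $(\lnot\supset)$ from $\Gamma\supset\Delta,A$ infer $\lnot A,\Gamma\supset\Delta$; $(\supset\lnot)$ from $A,\Gamma\supset\Delta$ infer $\Gamma\supset\Delta,\lnot A$; $(\land\supset)$ from $A,B,\Gamma\supset\Delta$ infer $A\land B,\Gamma\supset\Delta$; $(\supset\land)$ from $\Gamma\supset\Delta,A$ and $\Gamma\supset\Delta,B$ infer $\Gamma\supset\Delta,A\land B$). Sequents use finite multisets; $\Box\Gamma:=\{\Box C\mid C\in\Gamma\}$. G3s rules: (Ax) $P,\Gamma\supset\Delta,P$ ($P$ atomic); $(\bot\supset)$ $\bot,\Gamma\supset\Delta$; $(\to\supset)$ from $\Gamma\supset\Delta,A$ and $B,\Gamma\supset\Delta$ infer $A\to B,\Gamma\supset\Delta$; $(\supset\to)$ from $A,\Gamma\supset\Delta,B$ infer $\Gamma\supset\Delta,A\to B$; $(\Box\supset)$ from $A,\Box A,\Gamma\supset\Delta$ infer $\Box A,\Gamma\supset\Delta$; $(\supset\Box)$ from $\Box\Gamma\supset A$ infer $\Gamma',\Box\Gamma\supset\Delta',\Box A$. Correspondence: a symbol occurrence in a side formula (formula repeated unchanged from premise to conclusion) of a premise directly corresponds to the same occurrence in the conclusion; an active formula of a premise directly corresponds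 to its topmost occurrence as a subformula of the principal formula, symbolwise. Families are equivalence classes of $\Box$-occurrences under the reflexive-symmetric-transitive closure. $i\prec j$ if some $(\supset\Box)$ rule whose principal formula $\Box A$ has outermost $\Box$ in family $j$ has a premise containing a $\Box$ of family $i$. A prehistoric cycle is $i_0\prec\cdots\prec i_{n-1}\prec i_0$ ($n\ge1$); a proof is prehistoric-cycle-free if it has none. (Equivalently, in cut-free G3s proofs, one may restrict to families having an occurrence introduced as principal $\Box$ of a $(\supset\Box)$ rule.) *)

theory Defs
  imports Main
begin

datatype 'a fm = Atom 'a | Bot | Imp "'a fm" "'a fm" | Box "'a fm"
  | Neg "'a fm" | Conj "'a fm" "'a fm"

fun subfm :: "'a fm \<Rightarrow> nat list \<Rightarrow> 'a fm" where
  "subfm f [] = f"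
| "subfm (Imp a b) (0 # p) = subfm a p"
| "subfm (Imp a b) (Suc 0 # p) = subfm b p"
| "subfm (Conj a b) (0 # p) = subfm a p"
| "subfm (Conj a b) (Suc 0 # p) = subfm b p"
| "subfm (Box a) (0 # p) = subfm a p"
| "subfm (Neg a) (0 # p) = subfm a p"
| "subfm f p = f"

fun boxpos :: "'a fm \<Rightarrow> nat list set" where
  "boxpos (Atom x) = {}"
| "boxpos Bot = {}"
| "boxpos (Imp a b) = Cons 0 ` boxpos a \<union> Cons 1 ` boxpos b"
| "boxpos (Conj a b) = Cons 0 ` boxpos a \<union> Cons 1 ` boxpos b"
| "boxpos (Box a) = insert [] (Cons 0 ` boxpos a)"
| "boxpos (Neg a) = Cons 0 ` boxpos a"

text \<open>Sequents are pairs of lists (antecedent, succedent); a rule instance names the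
  position of its principal formula (and, for the right Box rule, the positions of the
  boxed antecedent formulas kept in the premise).\<close>

datatype rl = Ax nat nat | BotL nat | ImpL nat | ImpR nat | BoxL nat | BoxR nat "nat list"
  | NegL nat | NegR nat | ConjL nat | ConjR nat

fun rule_ok :: "'a fm list \<Rightarrow> 'a fm list \<Rightarrow> rl \<Rightarrow> bool" where
  "rule_ok G D (Ax i j) = (i < length G \<and> j < length D \<and> (\<exists>P. G ! i = Atom P \<and> D ! j = Atom P))"
| "rule_ok G D (BotL i) = (i < length G \<and> G ! i = Bot)"
| "rule_ok G D (ImpL i) = (i < length G \<and> (\<exists>a b. G ! i = Imp a b))"
| "rule_ok G D (ImpR i) = (i < length D \<and> (\<exists>a b. D ! i = Imp a b))"
| "rule_ok G D (BoxL i) = (i < length G \<and> (\<exists>a. G ! i = Box a))"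
| "rule_ok G D (BoxR i js) = (i < length D \<and> (\<exists>a. D ! i = Box a) \<and> distinct js \<and>
      (\<forall>j\<in>set js. j < length G \<and> (\<exists>c. G ! j = Box c)))"
| "rule_ok G D (NegL i) = (i < length G \<and> (\<exists>a. G ! i = Neg a))"
| "rule_ok G D (NegR i) = (i < length D \<and> (\<exists>a. D ! i = Neg a))"
| "rule_ok G D (ConjL i) = (i < length G \<and> (\<exists>a b. G ! i = Conj a b))"
| "rule_ok G D (ConjR i) = (i < length D \<and> (\<exists>a b. D ! i = Conj a b))"

text \<open>A source (s, j, p) refers to the subformula at path p of the j-th formula of the
  conclusion, in the succedent if s, in the antecedent otherwise.  Each premise formula is
  given by its source in the conclusion; this is exactly the direct correspondence
  (side formulas: path [], active formulas: their position inside the principal formula).\<close>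

type_synonym src = "bool \<times> nat \<times> nat list"

definition allS :: "bool \<Rightarrow> nat \<Rightarrow> src list" where
  "allS s n = map (\<lambda>j. (s, j, [])) [0..<n]"

definition ctxS :: "bool \<Rightarrow> nat \<Rightarrow> nat \<Rightarrow> src list" where
  "ctxS s n i = map (\<lambda>j. (s, j, [])) (filter (\<lambda>j. j \<noteq> i) [0..<n])"

fun prems :: "'a fm list \<Rightarrow> 'a fm list \<Rightarrow> rl \<Rightarrow> (src list \<times> src list) list" where
  "prems G D (Ax i j) = []"
| "prems G D (BotL i) = []"
| "prems G D (ImpL i) =
    [(ctxS False (length G) i, (False, i, [0]) # allS True (length D)),
     ((False, i, [1]) # ctxS False (length G) i, allS True (length D))]"
| "prems G D (ImpR i) =
    [((True, i, [0]) # allS False (length G), (True, i, [1]) # ctxS True (length D) i)]"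
| "prems G D (BoxL i) =
    [((False, i, [0]) # allS False (length G), allS True (length D))]"
| "prems G D (BoxR i js) =
    [(map (\<lambda>j. (False, j, [])) js, [(True, i, [0])])]"
| "prems G D (NegL i) =
    [(ctxS False (length G) i, (False, i, [0]) # allS True (length D))]"
| "prems G D (NegR i) =
    [((True, i, [0]) # allS False (length G), ctxS True (length D) i)]"
| "prems G D (ConjL i) =
    [((False, i, [0]) # (False, i, [1]) # ctxS False (length G) i, allS True (length D))]"
| "prems G D (ConjR i) =
    [(allS False (length G), (True, i, [0]) # ctxS True (length D) i),
     (allS False (length G), (True, i, [1]) # ctxS True (length D) i)]"

definition srcfm :: "'a fm list \<Rightarrow> 'a fm list \<Rightarrow> src \<Rightarrow> 'a fm" where
  "srcfm G D x = (case x of (s, j, p) \<Rightarrow> subfm ((if s then D else G) ! j) p)"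

definition inst :: "'a fm list \<Rightarrow> 'a fm list \<Rightarrow> src list \<times> src list \<Rightarrow> 'a fm list \<times> 'a fm list" where
  "inst G D pr = (map (srcfm G D) (fst pr), map (srcfm G D) (snd pr))"

datatype 'a ptree = PT "'a fm list" "'a fm list" rl "'a ptree list"

fun ant :: "'a ptree \<Rightarrow> 'a fm list" where "ant (PT G D r ts) = G"
fun suc :: "'a ptree \<Rightarrow> 'a fm list" where "suc (PT G D r ts) = D"
fun rlof :: "'a ptree \<Rightarrow> rl" where "rlof (PT G D r ts) = r"
fun kids :: "'a ptree \<Rightarrow> 'a ptree list" where "kids (PT G D r ts) = ts"

inductive valid :: "'a ptree \<Rightarrow> bool" where
  "rule_ok G D r \<Longrightarrow>
   list_all2 (\<lambda>t pr. (ant t, suc t) = inst G D pr) ts (prems G D r) \<Longrightarrow>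
   (\<forall>t\<in>set ts. valid t) \<Longrightarrow> valid (PT G D r ts)"

fun subtree :: "'a ptree \<Rightarrow> nat list \<Rightarrow> 'a ptree option" where
  "subtree t [] = Some t"
| "subtree (PT G D r ts) (k # a) = (if k < length ts then subtree (ts ! k) a else None)"

text \<open>An occurrence: (node address, succedent?, formula index, path of the Box symbol).\<close>

type_synonym occ = "nat list \<times> bool \<times> nat \<times> nat list"

definition side :: "bool \<Rightarrow> 'a ptree \<Rightarrow> 'a fm list" where
  "side s t = (if s then suc t else ant t)"

definition is_occ :: "'a ptree \<Rightarrow> occ \<Rightarrow> bool" where
  "is_occ T x = (case x of (a, s, j, p) \<Rightarrow>
     (\<exists>t. subtree T a = Some t \<and> j < length (side s t) \<and> p \<in> boxpos (side s t ! j)))"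

text \<open>Direct correspondence: a Box occurrence in premise k of the node at address a
  corresponds to the same symbol occurrence in the conclusion.\<close>

definition dcorr :: "'a ptree \<Rightarrow> (occ \<times> occ) set" where
  "dcorr T = {((a @ [k], s, j, p), (a, s', j', q @ p)) | a k s j p s' j' q t.
     subtree T a = Some t \<and> is_occ T (a @ [k], s, j, p) \<and>
     k < length (prems (ant t) (suc t) (rlof t)) \<and>
     j < length ((if s then snd else fst) (prems (ant t) (suc t) (rlof t) ! k)) \<and>
     ((if s then snd else fst) (prems (ant t) (suc t) (rlof t) ! k)) ! j = (s', j', q)}"

definition samefam :: "'a ptree \<Rightarrow> occ \<Rightarrow> occ \<Rightarrow> bool" where
  "samefam T x y = (is_occ T x \<and> (x, y) \<in> (dcorr T \<union> (dcorr T)\<inverse>)\<^sup>*)"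

text \<open>(x, y) \<in> prec T iff family(x) precedes family(y): some right Box rule at address a has
  its principal Box in the family of y and its premise (address a @ [0]) contains a Box
  of the family of x.\<close>

definition prec :: "'a ptree \<Rightarrow> (occ \<times> occ) set" where
  "prec T = {(x, y). \<exists>a t i js. subtree T a = Some t \<and> rlof t = BoxR i js \<and>
      samefam T (a, True, i, []) y \<and> (\<exists>s j p. samefam T (a @ [0], s, j, p) x)}"

definition pcf :: "'a ptree \<Rightarrow> bool" where
  "pcf T = (\<not> (\<exists>x. (x, x) \<in> (prec T)\<^sup>+))"

definition goal :: "'a \<Rightarrow> 'a fm" where
  "goal P = Imp (Box (Imp (Conj (Atom P) (Neg (Box (Atom P)))) (Atom P)))
                (Neg (Box (Conj (Atom P) (Neg (Box (Atom P))))))"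

end

theory Submission
  imports Defs
begin

abbreviation fA :: "'a \<Rightarrow> 'a fm" where "fA P \<equiv> Conj (Atom P) (Neg (Box (Atom P)))"
abbreviation fAP :: "'a \<Rightarrow> 'a fm" where "fAP P \<equiv> Imp (fA P) (Atom P)"

definition C1 :: "'a \<Rightarrow> 'a fm list \<Rightarrow> 'a fm list \<Rightarrow> bool" where
 "C1 P G D = (set G \<subseteq> {Box (fAP P), fAP P, Box (fA P), fA P, Neg (Box (Atom P)), Atom P}
     \<and> set D \<subseteq> {goal P, Neg (Box (fA P)), Box (Atom P)})"
definition C2 :: "'a \<Rightarrow> 'a fm list \<Rightarrow> 'a fm list \<Rightarrow> bool" where
 "C2 P G D = (set G \<subseteq> {Box (fAP P), fAP P} \<and> set D \<subseteq> {Atom P, fA P})"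

lemma allS_map: "map (srcfm G D) (allS False (length G)) = G" "map (srcfm G D) (allS True (length D)) = D"
  by (auto simp: allS_def srcfm_def intro: nth_equalityI)

lemma ctxS_set: "set (map (srcfm G D) (ctxS False (length G) i)) \<subseteq> set G"
   "set (map (srcfm G D) (ctxS True (length D) i)) \<subseteq> set D"
  by (auto simp: ctxS_def srcfm_def)

lemma boxR_set: "\<forall>j\<in>set js. j < length G \<Longrightarrow> map (srcfm G D) (map (\<lambda>j. (False, j, [])) js) = map (\<lambda>j. G!j) js"
  by (auto simp: srcfm_def)

lemma key:
  assumes ok: "rule_ok G D r" and C: "C1 P G D \<or> C2 P G D"
  shows "(\<exists>i js j. r = BoxR i js \<and> j \<in> set js \<and> G!j = Box (fA P)) \<or>
     (\<exists>k < length (prems G D r). C1 P (fst (inst G D (prems G D r ! k))) (snd (inst G D (prems G D r ! k)))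
         \<or> C2 P (fst (inst G D (prems G D r ! k))) (snd (inst G D (prems G D r ! k))))"
proof (cases r)
  case (Ax i j)
  then obtain Q where "j < length D" "D!j = Atom Q" using ok by auto
  then have "Atom Q \<in> set D" by (metis nth_mem)
  then have "C2 P G D" and "Q = P" using C by (auto simp: C1_def C2_def goal_def)
  moreover obtain Q' where "i < length G" "G!i = Atom Q'" using ok Ax by auto
  moreover then have "Atom Q' \<in> set G" by (metis nth_mem)
  ultimately show ?thesis by (auto simp: C2_def)
next
  case (BotL i)
  then have "Bot \<in> set G" using ok by (metis nth_mem rule_ok.simps(2))
  then show ?thesis using C by (auto simp: C1_def C2_def)
next
  case (ImpL i)
  then obtain a b where i: "i < length G" "G!i = Imp a b" using ok by auto
  then have m: "Imp a b \<in> set G" by (metis nth_mem)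
  show ?thesis
  proof (cases "C1 P G D")
    case True
    then have "G!i = fAP P" using m i by (auto simp: C1_def)
    then have e: "fst (inst G D (prems G D r ! 1)) = Atom P # map (srcfm G D) (ctxS False (length G) i)"
        "snd (inst G D (prems G D r ! 1)) = D"
      using ImpL by (simp_all add: inst_def allS_map srcfm_def)
    have "C1 P (fst (inst G D (prems G D r ! 1))) (snd (inst G D (prems G D r ! 1)))"
      unfolding e using True ctxS_set(1)[of G D i] unfolding C1_def by auto
    moreover have "1 < length (prems G D r)" using ImpL by simp
    ultimately show ?thesis by blast
  next
    case False
    then have C2: "C2 P G D" using C by auto
    then have "G!i = fAP P" using m i by (auto simp: C2_def)
    then have e: "fst (inst G D (prems G D r ! 0)) = map (srcfm G D) (ctxS False (length G) i)"
        "snd (inst G D (prems G D r ! 0)) = fA P # D"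
      using ImpL by (simp_all add: inst_def allS_map srcfm_def)
    have "C2 P (fst (inst G D (prems G D r ! 0))) (snd (inst G D (prems G D r ! 0)))"
      unfolding e using C2 ctxS_set(1)[of G D i] unfolding C2_def by auto
    moreover have "0 < length (prems G D r)" using ImpL by simp
    ultimately show ?thesis by blast
  qed
next
  case (ImpR i)
  then obtain a b where i: "i < length D" "D!i = Imp a b" using ok by auto
  then have m: "Imp a b \<in> set D" by (metis nth_mem)
  then have C1: "C1 P G D" and "D!i = goal P" using C i by (auto simp: C1_def C2_def goal_def)
  then have "C1 P (fst (inst G D (prems G D r ! 0))) (snd (inst G D (prems G D r ! 0)))"
      using ImpR ctxS_set[of G D i] by (auto simp: C1_def inst_def allS_map srcfm_def goal_def)
  moreover have "0 < length (prems G D r)" using ImpR by simp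
  ultimately show ?thesis by blast
next
  case (BoxL i)
  then obtain a where i: "i < length G" "G!i = Box a" using ok by auto
  then have m: "Box a \<in> set G" by (metis nth_mem)
  show ?thesis
  proof (cases "C1 P G D")
    case True
    then have "G!i = Box (fAP P) \<or> G!i = Box (fA P)" using m i by (auto simp: C1_def)
    then have "C1 P (fst (inst G D (prems G D r ! 0))) (snd (inst G D (prems G D r ! 0)))"
      using True BoxL by (auto simp: C1_def inst_def allS_map srcfm_def)
    moreover have "0 < length (prems G D r)" using BoxL by simp
    ultimately show ?thesis by blast
  next
    case False
    then have C2: "C2 P G D" using C by auto
    then have "G!i = Box (fAP P)" using m i by (auto simp: C2_def)
    then have "C2 P (fst (inst G D (prems G D r ! 0))) (snd (inst G D (prems G D r ! 0)))"
      using C2 BoxL by (auto simp: C2_def inst_def allS_map srcfm_def)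
    moreover have "0 < length (prems G D r)" using BoxL by simp
    ultimately show ?thesis by blast
  qed
next
  case (BoxR i js)
  show ?thesis
  proof (cases "\<exists>j\<in>set js. G!j = Box (fA P)")
    case True then show ?thesis using BoxR by auto
  next
    case False
    obtain a where i: "i < length D" "D!i = Box a" using ok BoxR by auto
    then have m: "Box a \<in> set D" by (metis nth_mem)
    then have C1: "C1 P G D" and aP: "a = Atom P" using C by (auto simp: C1_def C2_def goal_def)
    have "\<forall>j\<in>set js. G!j = Box (fAP P)"
    proof
      fix j assume j: "j \<in> set js"
      then obtain c where "j < length G" "G!j = Box c" using ok BoxR by auto
      then have "Box c \<in> set G" by (metis nth_mem)
      then show "G!j = Box (fAP P)" using C1 False j \<open>G!j = Box c\<close> by (auto simp: C1_def)
    qed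
    then have "C2 P (fst (inst G D (prems G D r ! 0))) (snd (inst G D (prems G D r ! 0)))"
      using BoxR ok i aP by (auto simp: C2_def inst_def srcfm_def)
    moreover have "0 < length (prems G D r)" using BoxR by simp
    ultimately show ?thesis by blast
  qed
next
  case (NegL i)
  then obtain a where i: "i < length G" "G!i = Neg a" using ok by auto
  then have m: "Neg a \<in> set G" by (metis nth_mem)
  then have C1: "C1 P G D" and "G!i = Neg (Box (Atom P))" using C i by (auto simp: C1_def C2_def)
  then have "C1 P (fst (inst G D (prems G D r ! 0))) (snd (inst G D (prems G D r ! 0)))"
      using NegL ctxS_set[of G D i] by (auto simp: C1_def inst_def allS_map srcfm_def)
  moreover have "0 < length (prems G D r)" using NegL by simp
  ultimately show ?thesis by blast
next
  case (NegR i)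
  then obtain a where i: "i < length D" "D!i = Neg a" using ok by auto
  then have m: "Neg a \<in> set D" by (metis nth_mem)
  then have C1: "C1 P G D" and "D!i = Neg (Box (fA P))" using C i by (auto simp: C1_def C2_def goal_def)
  then have e: "fst (inst G D (prems G D r ! 0)) = Box (fA P) # G"
        "snd (inst G D (prems G D r ! 0)) = map (srcfm G D) (ctxS True (length D) i)"
      using NegR by (simp_all add: inst_def allS_map srcfm_def)
  have "C1 P (fst (inst G D (prems G D r ! 0))) (snd (inst G D (prems G D r ! 0)))"
      unfolding e using C1 ctxS_set(2)[of G D i] unfolding C1_def by auto
  moreover have "0 < length (prems G D r)" using NegR by simp
  ultimately show ?thesis by blast
next
  case (ConjL i)
  then obtain a b where i: "i < length G" "G!i = Conj a b" using ok by auto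
  then have m: "Conj a b \<in> set G" by (metis nth_mem)
  then have C1: "C1 P G D" and "G!i = fA P" using C i by (auto simp: C1_def C2_def)
  then have "C1 P (fst (inst G D (prems G D r ! 0))) (snd (inst G D (prems G D r ! 0)))"
      using ConjL ctxS_set[of G D i] by (auto simp: C1_def inst_def allS_map srcfm_def)
  moreover have "0 < length (prems G D r)" using ConjL by simp
  ultimately show ?thesis by blast
next
  case (ConjR i)
  then obtain a b where i: "i < length D" "D!i = Conj a b" using ok by auto
  then have m: "Conj a b \<in> set D" by (metis nth_mem)
  then have C2: "C2 P G D" and "D!i = fA P" using C i by (auto simp: C1_def C2_def goal_def)
  then have "C2 P (fst (inst G D (prems G D r ! 0))) (snd (inst G D (prems G D r ! 0)))"
      using ConjR ctxS_set[of G D i] by (auto simp: C2_def inst_def allS_map srcfm_def)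
  moreover have "0 < length (prems G D r)" using ConjR by simp
  ultimately show ?thesis by blast
qed

lemma part1:
  "valid t \<Longrightarrow> C1 P (ant t) (suc t) \<or> C2 P (ant t) (suc t) \<Longrightarrow>
   \<exists>b t' i js j. subtree t b = Some t' \<and> rlof t' = BoxR i js \<and> j \<in> set js \<and> ant t' ! j = Box (fA P)"
proof (induction rule: valid.induct)
  case (1 G D r ts)
  have len: "length ts = length (prems G D r)" using "1.hyps"(2) by (rule list_all2_lengthD)
  have CC: "C1 P G D \<or> C2 P G D" using "1.prems" by simp
  from key[OF "1.hyps"(1) CC] consider
     (a) i js j where "r = BoxR i js" "j \<in> set js" "G!j = Box (fA P)"
   | (b) k where "k < length (prems G D r)" "C1 P (fst (inst G D (prems G D r ! k))) (snd (inst G D (prems G D r ! k)))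
         \<or> C2 P (fst (inst G D (prems G D r ! k))) (snd (inst G D (prems G D r ! k)))"
    by blast
  then show ?case
  proof cases
    case a
    then show ?thesis by (intro exI[of _ "[]"] exI[of _ "PT G D r ts"] exI[of _ i] exI[of _ js] exI[of _ j]) simp
  next
    case b
    have eq: "(ant (ts!k), suc (ts!k)) = inst G D (prems G D r ! k)"
      using list_all2_nthD[OF "1.hyps"(2), of k] b(1) len by simp
    have mem: "ts!k \<in> set ts" using b(1) len by simp
    have IH0: "valid (ts!k) \<and> (C1 P (ant (ts!k)) (suc (ts!k)) \<or> C2 P (ant (ts!k)) (suc (ts!k)) \<longrightarrow>
   (\<exists>b t' i js j. subtree (ts!k) b = Some t' \<and> rlof t' = BoxR i js \<and> j \<in> set js \<and> ant t' ! j = Box (fA P)))"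
      using bspec[OF "1.IH" mem] by simp
    have IH: "C1 P (ant (ts!k)) (suc (ts!k)) \<or> C2 P (ant (ts!k)) (suc (ts!k)) \<Longrightarrow>
   \<exists>b t' i js j. subtree (ts!k) b = Some t' \<and> rlof t' = BoxR i js \<and> j \<in> set js \<and> ant t' ! j = Box (fA P)" using IH0 by simp
    have "C1 P (ant (ts!k)) (suc (ts!k)) \<or> C2 P (ant (ts!k)) (suc (ts!k))"
    proof -
      have e1: "ant (ts!k) = fst (inst G D (prems G D r ! k))" using eq by (metis fst_conv)
      have e2: "suc (ts!k) = snd (inst G D (prems G D r ! k))" using eq by (metis snd_conv)
      show ?thesis unfolding e1 e2 by (rule b(2))
    qed
    then obtain bb t' i js j where "subtree (ts!k) bb = Some t'" "rlof t' = BoxR i js" "j \<in> set js" "ant t' ! j = Box (fA P)"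
      using IH by blast
    moreover have "k < length ts" using b(1) len by simp
    ultimately show ?thesis by (intro exI[of _ "k#bb"] exI[of _ t'] exI[of _ i] exI[of _ js] exI[of _ j]) simp
  qed
qed

definition good :: "'a \<Rightarrow> bool \<Rightarrow> 'a fm \<Rightarrow> bool" where
 "good P s f = (if s then f \<in> {goal P, Neg (Box (fA P)), Box (Atom P), fA P, Neg (Box (Atom P)), Atom P}
                else f \<in> {Box (fAP P), fAP P, Box (fA P), fA P, Neg (Box (Atom P)), Atom P, Box (Atom P)})"

definition orig :: "'a \<Rightarrow> bool \<Rightarrow> 'a fm \<Rightarrow> nat list" where
 "orig P s f = (if s then (if f = goal P then [] else if f = Neg (Box (fA P)) then [1]
     else if f = Box (Atom P) then [1,0,0,1,0] else if f = fA P then [0,0,0]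
     else if f = Neg (Box (Atom P)) then [0,0,0,1] else [])
  else (if f = Box (fAP P) then [0] else if f = fAP P then [0,0] else if f = Box (fA P) then [1,0]
     else if f = fA P then [1,0,0] else if f = Neg (Box (Atom P)) then [1,0,0,1]
     else if f = Box (Atom P) then [0,0,0,1,0] else []))"

lemma set_allS: "(a,b,c) \<in> set (allS s n) \<longleftrightarrow> a = s \<and> b < n \<and> c = []"
  by (auto simp: allS_def)
lemma set_ctxS: "(a,b,c) \<in> set (ctxS s n i) \<longleftrightarrow> a = s \<and> b < n \<and> b \<noteq> i \<and> c = []"
  by (auto simp: ctxS_def)

fun act :: "rl \<Rightarrow> bool \<Rightarrow> src set" where
  "act (ImpL i) s = (if s then {(False,i,[0])} else {(False,i,[1])})"
| "act (ImpR i) s = (if s then {(True,i,[1])} else {(True,i,[0])})"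
| "act (BoxL i) s = (if s then {} else {(False,i,[0])})"
| "act (BoxR i js) s = (if s then {(True,i,[0])} else {})"
| "act (NegL i) s = (if s then {(False,i,[0])} else {})"
| "act (NegR i) s = (if s then {} else {(True,i,[0])})"
| "act (ConjL i) s = (if s then {} else {(False,i,[0]),(False,i,[1])})"
| "act (ConjR i) s = (if s then {(True,i,[0]),(True,i,[1])} else {})"
| "act _ _ = {}"

lemma src_split:
  assumes ok: "rule_ok G D r" and k: "k < length (prems G D r)"
    and x: "x \<in> set ((if s then snd else fst) (prems G D r ! k))"
  shows "(\<exists>j. x = (s,j,[]) \<and> j < length (if s then D else G)) \<or> x \<in> act r s"
proof -
  obtain a b c where xe: "x = (a,b,c)" by (cases x) auto
  show ?thesis using ok k x unfolding xe
    by (cases r; cases s; auto simp: less_Suc_eq set_allS set_ctxS)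
qed

lemma transfer_act:
 assumes ok: "rule_ok G D r" and gG: "\<forall>j<length G. good P False (G!j)" and gD: "\<forall>j<length D. good P True (D!j)"
   and x: "(s',j',q) \<in> act r s"
 shows "j' < length (if s' then D else G) \<and> good P s (subfm ((if s' then D else G)!j') q) \<and>
   (\<forall>p\<in>boxpos (subfm ((if s' then D else G)!j') q). q@p \<in> boxpos ((if s' then D else G)!j') \<and>
      orig P s (subfm ((if s' then D else G)!j') q) @ p = orig P s' ((if s' then D else G)!j') @ (q@p))"
proof (cases r)
  case (Ax i j) then show ?thesis using x by simp
next
  case (BotL i) then show ?thesis using x by simp
next
  case (ImpL i)
  then obtain a b where i: "i < length G" "G!i = Imp a b" using ok by auto
  then have "good P False (Imp a b)" using gG by metis
  then have gi: "G!i = fAP P" using i by (simp add: good_def)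
  have sx: "s' = False" "j' = i" "q = (if s then [0] else [1])" using x ImpL by (auto split: if_splits)
  show ?thesis unfolding sx using gi i(1) by (cases s; simp add: good_def orig_def goal_def)
next
  case (ImpR i)
  then obtain a b where i: "i < length D" "D!i = Imp a b" using ok by auto
  then have "good P True (Imp a b)" using gD by metis
  then have gi: "D!i = goal P" using i by (simp add: good_def goal_def)
  have sx: "s' = True" "j' = i" "q = (if s then [1] else [0])" using x ImpR by (auto split: if_splits)
  show ?thesis unfolding sx using gi i(1) by (cases s; simp add: good_def orig_def goal_def)
next
  case (BoxL i)
  then obtain a where i: "i < length G" "G!i = Box a" using ok by auto
  then have "good P False (Box a)" using gG by metis
  then have gi: "G!i = Box (fAP P) \<or> G!i = Box (fA P) \<or> G!i = Box (Atom P)" using i by (simp add: good_def)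
  have sx: "s' = False" "j' = i" "q = [0]" "s = False" using x BoxL by (auto split: if_splits)
  show ?thesis unfolding sx using gi i(1) by (elim disjE; simp add: good_def orig_def goal_def)
next
  case (BoxR i js)
  then obtain a where i: "i < length D" "D!i = Box a" using ok by auto
  then have "good P True (Box a)" using gD by metis
  then have gi: "D!i = Box (Atom P)" using i by (simp add: good_def goal_def)
  have sx: "s' = True" "j' = i" "q = [0]" "s = True" using x BoxR by (auto split: if_splits)
  show ?thesis unfolding sx using gi i(1) by (simp add: good_def orig_def goal_def)
next
  case (NegL i)
  then obtain a where i: "i < length G" "G!i = Neg a" using ok by auto
  then have "good P False (Neg a)" using gG by metis
  then have gi: "G!i = Neg (Box (Atom P))" using i by (simp add: good_def)
  have sx: "s' = False" "j' = i" "q = [0]" "s = True" using x NegL by (auto split: if_splits)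
  show ?thesis unfolding sx using gi i(1) by (simp add: good_def orig_def goal_def)
next
  case (NegR i)
  then obtain a where i: "i < length D" "D!i = Neg a" using ok by auto
  then have "good P True (Neg a)" using gD by metis
  then have gi: "D!i = Neg (Box (fA P)) \<or> D!i = Neg (Box (Atom P))" using i by (simp add: good_def goal_def)
  have sx: "s' = True" "j' = i" "q = [0]" "s = False" using x NegR by (auto split: if_splits)
  show ?thesis unfolding sx using gi i(1) by (elim disjE; simp add: good_def orig_def goal_def)
next
  case (ConjL i)
  then obtain a b where i: "i < length G" "G!i = Conj a b" using ok by auto
  then have "good P False (Conj a b)" using gG by metis
  then have gi: "G!i = fA P" using i by (simp add: good_def)
  have sx: "s' = False" "j' = i" "q = [0] \<or> q = [1]" "s = False" using x ConjL by (auto split: if_splits)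
  show ?thesis unfolding sx(1,2,4) using gi i(1) sx(3) by (elim disjE; simp add: good_def orig_def goal_def)
next
  case (ConjR i)
  then obtain a b where i: "i < length D" "D!i = Conj a b" using ok by auto
  then have "good P True (Conj a b)" using gD by metis
  then have gi: "D!i = fA P" using i by (simp add: good_def goal_def)
  have sx: "s' = True" "j' = i" "q = [0] \<or> q = [1]" "s = True" using x ConjR by (auto split: if_splits)
  show ?thesis unfolding sx(1,2,4) using gi i(1) sx(3) by (elim disjE; simp add: good_def orig_def goal_def)
qed

lemma transfer:
 assumes ok: "rule_ok G D r" and gG: "\<forall>j<length G. good P False (G!j)" and gD: "\<forall>j<length D. good P True (D!j)"
   and k: "k < length (prems G D r)" and x: "(s',j',q) \<in> set ((if s then snd else fst) (prems G D r ! k))"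
 shows "j' < length (if s' then D else G) \<and> good P s (subfm ((if s' then D else G)!j') q) \<and>
   (\<forall>p\<in>boxpos (subfm ((if s' then D else G)!j') q). q@p \<in> boxpos ((if s' then D else G)!j') \<and>
      orig P s (subfm ((if s' then D else G)!j') q) @ p = orig P s' ((if s' then D else G)!j') @ (q@p))"
proof -
  from src_split[OF ok k x] show ?thesis
  proof
    assume "\<exists>j. (s', j', q) = (s, j, []) \<and> j < length (if s then D else G)"
    then have e: "s' = s" "q = []" "j' < length (if s then D else G)" by auto
    show ?thesis using e gG gD by (cases s) auto
  next
    assume "(s', j', q) \<in> act r s"
    then show ?thesis by (rule transfer_act[OF ok gG gD])
  qed
qed


lemma subtree_snoc: "subtree T (b@[k]) = (case subtree T b of None \<Rightarrow> None
   | Some t \<Rightarrow> if k < length (kids t) then Some (kids t ! k) else None)"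
proof (induction b arbitrary: T)
  case Nil show ?case by (cases T) simp
next
  case (Cons c b) show ?case by (cases T) (simp add: Cons)
qed

lemma valid_subtree: "valid T \<Longrightarrow> subtree T a = Some t \<Longrightarrow> valid t"
proof (induction a arbitrary: T)
  case Nil then show ?case by simp
next
  case (Cons c a)
  obtain G D r ts where e: "T = PT G D r ts" by (cases T)
  have v: "\<forall>t\<in>set ts. valid t" using Cons.prems(1) unfolding e by (cases rule: valid.cases) auto
  have c: "c < length ts" "subtree (ts!c) a = Some t" using Cons.prems(2) unfolding e by (auto split: if_splits)
  then have "valid (ts!c)" using v by simp
  then show ?case using Cons.IH c(2) by blast
qed

lemma trace:
  assumes vT: "valid T" and r0: "ant T = []" "suc T = [goal P]"
  shows "subtree T a = Some t \<Longrightarrow> j < length (side s t) \<Longrightarrow> good P s (side s t ! j) \<and>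
    (\<forall>p\<in>boxpos (side s t ! j). ((a,s,j,p), ([],True,0,orig P s (side s t ! j) @ p)) \<in> (dcorr T)\<^sup>*)"
proof (induction a arbitrary: t s j rule: rev_induct)
  case Nil
  then have t: "t = T" by simp
  show ?case
  proof (cases s)
    case True
    then have "side s t = [goal P]" using t r0 by (simp add: side_def)
    then show ?thesis using Nil.prems(2) True by (simp add: good_def orig_def goal_def)
  next
    case False
    then have "side s t = []" using t r0 by (simp add: side_def)
    then show ?thesis using Nil.prems(2) by simp
  qed
next
  case (snoc k b)
  from snoc.prems(1) obtain t0 where t0: "subtree T b = Some t0" "k < length (kids t0)" "t = kids t0 ! k"
    by (auto simp: subtree_snoc split: option.splits if_splits)
  have v0: "valid t0" using valid_subtree[OF vT t0(1)] .
  then obtain G D r ts where e0: "t0 = PT G D r ts" and ok: "rule_ok G D r"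
    and la: "list_all2 (\<lambda>t pr. (ant t, suc t) = inst G D pr) ts (prems G D r)"
    by (cases rule: valid.cases) auto
  have len: "length ts = length (prems G D r)" using la by (rule list_all2_lengthD)
  have kk: "k < length (prems G D r)" using t0(2) e0 len by simp
  have tk: "(ant t, suc t) = inst G D (prems G D r ! k)" using list_all2_nthD[OF la, of k] t0 e0 len by simp
  define L where "L = (if s then snd else fst) (prems G D r ! k)"
  have sideL: "side s t = map (srcfm G D) L" using tk unfolding L_def side_def inst_def by (cases s) auto
  have jL: "j < length L" using snoc.prems(2) sideL by simp
  obtain s' j' q where x: "L ! j = (s',j',q)" by (cases "L!j") auto
  have xin: "(s',j',q) \<in> set L" using jL x by (metis nth_mem)
  have sd: "side False t0 = G" "side True t0 = D" by (simp_all add: side_def e0)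
  have gG: "\<forall>j<length G. good P False (G!j)"
    using snoc.IH[OF t0(1), of _ False] sd by simp
  have gD: "\<forall>j<length D. good P True (D!j)"
    using snoc.IH[OF t0(1), of _ True] sd by simp
  have tr: "j' < length (if s' then D else G) \<and> good P s (subfm ((if s' then D else G)!j') q) \<and>
   (\<forall>p\<in>boxpos (subfm ((if s' then D else G)!j') q). q@p \<in> boxpos ((if s' then D else G)!j') \<and>
      orig P s (subfm ((if s' then D else G)!j') q) @ p = orig P s' ((if s' then D else G)!j') @ (q@p))"
    using transfer[OF ok gG gD kk] xin unfolding L_def by blast
  have side0: "side s' t0 = (if s' then D else G)" by (simp add: side_def e0)
  have fj: "side s t ! j = subfm ((if s' then D else G)!j') q" using sideL jL x by (simp add: srcfm_def)
  have IH0: "\<forall>p\<in>boxpos ((if s' then D else G)!j'). ((b,s',j',p), ([],True,0,orig P s' ((if s' then D else G)!j') @ p)) \<in> (dcorr T)\<^sup>*"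
    using snoc.IH[OF t0(1), of j' s'] tr side0 by simp
  show ?case
  proof
    show "good P s (side s t ! j)" using tr fj by simp
  next
    show "\<forall>p\<in>boxpos (side s t ! j). ((b @ [k], s, j, p), [], True, 0, orig P s (side s t ! j) @ p) \<in> (dcorr T)\<^sup>*"
    proof
      fix p assume p: "p \<in> boxpos (side s t ! j)"
      then have p': "p \<in> boxpos (subfm ((if s' then D else G)!j') q)" using fj by simp
      have f1: "subtree T b = Some t0" by (rule t0(1))
      have f2: "is_occ T (b@[k],s,j,p)" unfolding is_occ_def using snoc.prems p by auto
      have f3: "k < length (prems (ant t0) (suc t0) (rlof t0))" using kk e0 by simp
      have f4: "j < length ((if s then snd else fst) (prems (ant t0) (suc t0) (rlof t0) ! k))"
        using jL e0 unfolding L_def by simp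
      have f5: "((if s then snd else fst) (prems (ant t0) (suc t0) (rlof t0) ! k)) ! j = (s',j',q)"
        using x e0 unfolding L_def by simp
      have step: "((b@[k],s,j,p),(b,s',j',q@p)) \<in> dcorr T"
        unfolding dcorr_def using f1 f2 f3 f4 f5 by blast
      have rest: "((b,s',j',q@p), ([],True,0,orig P s' ((if s' then D else G)!j') @ (q@p))) \<in> (dcorr T)\<^sup>*"
        using IH0 tr p' by blast
      have oe: "orig P s (side s t ! j) @ p = orig P s' ((if s' then D else G)!j') @ (q@p)"
        using tr p' fj by simp
      show "((b @ [k], s, j, p), [], True, 0, orig P s (side s t ! j) @ p) \<in> (dcorr T)\<^sup>*"
        unfolding oe using step rest by (rule converse_rtrancl_into_rtrancl)
    qed
  qed
qed

theorem mainTheorem10: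
  fixes P :: 'a
  shows "\<not> (\<exists>T :: 'a ptree. valid T \<and> ant T = [] \<and> suc T = [goal P] \<and> pcf T)"
proof
  assume "\<exists>T :: 'a ptree. valid T \<and> ant T = [] \<and> suc T = [goal P] \<and> pcf T"
  then obtain T :: "'a ptree" where vT: "valid T" and r0: "ant T = []" "suc T = [goal P]" and pc: "pcf T"
    by blast
  have "C1 P (ant T) (suc T)" using r0 by (simp add: C1_def)
  then obtain b t' i js j where st: "subtree T b = Some t'" "rlof t' = BoxR i js" "j \<in> set js"
      "ant t' ! j = Box (fA P)"
    using part1[OF vT] by blast
  have vt: "valid t'" using valid_subtree[OF vT st(1)] .
  then obtain G D ts where e: "t' = PT G D (BoxR i js) ts" and ok: "rule_ok G D (BoxR i js)"
    and la: "list_all2 (\<lambda>t pr. (ant t, suc t) = inst G D pr) ts (prems G D (BoxR i js))"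
    using st(2) by (cases rule: valid.cases) auto
  obtain c where iD: "i < length D" "D!i = Box c" using ok by auto
  have jsG: "\<forall>j\<in>set js. j < length G" using ok by auto
  have trx: "good P True (D!i) \<and> (\<forall>p\<in>boxpos (D!i). ((b,True,i,p), ([],True,0,orig P True (D!i) @ p)) \<in> (dcorr T)\<^sup>*)"
    using trace[OF vT r0 st(1), of i True] iD e by (simp add: side_def)
  then have Di: "D!i = Box (Atom P)" using iD by (simp add: good_def goal_def)
  define R where "R = (([]::nat list),True,(0::nat),[1,0,0,1,0::nat])"
  define x where "x = (b,True,i,([]::nat list))"
  have xR: "(x, R) \<in> (dcorr T)\<^sup>*" using trx Di unfolding x_def R_def by (simp add: orig_def goal_def)
  have len: "length ts = 1" using list_all2_lengthD[OF la] by simp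
  have t1: "(ant (ts!0), suc (ts!0)) = inst G D (prems G D (BoxR i js) ! 0)"
    using list_all2_nthD[OF la, of 0] len by simp
  have ant1: "ant (ts!0) = map (\<lambda>j. G!j) js"
    using t1 jsG by (simp add: inst_def srcfm_def)
  obtain kx where kx: "kx < length js" "js!kx = j" using st(3) by (metis in_set_conv_nth)
  have Gj: "G!j = Box (fA P)" using st(4) e by simp
  have a1: "ant (ts!0) ! kx = Box (fA P)" using ant1 kx Gj by simp
  have s1: "subtree T (b@[0]) = Some (ts!0)" using st(1) e len by (simp add: subtree_snoc)
  have kl: "kx < length (side False (ts!0))" using ant1 kx by (simp add: side_def)
  have ty: "good P False (Box (fA P)) \<and> (\<forall>p\<in>boxpos (Box (fA P)). ((b@[0],False,kx,p), ([],True,0,orig P False (Box (fA P)) @ p)) \<in> (dcorr T)\<^sup>*)"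
    using trace[OF vT r0 s1 kl] a1 by (simp add: side_def)
  define y where "y = (b@[0],False,kx,[0,1,0::nat])"
  have yR: "(y, R) \<in> (dcorr T)\<^sup>*" using ty unfolding y_def R_def by (simp add: orig_def goal_def)
  have occx: "is_occ T x" unfolding x_def is_occ_def using st(1) e iD Di by (auto simp: side_def)
  have occy: "is_occ T y" unfolding y_def is_occ_def using s1 kl a1 by (auto simp: side_def)
  have sub: "(dcorr T)\<^sup>* \<subseteq> (dcorr T \<union> (dcorr T)\<inverse>)\<^sup>*" by (rule rtrancl_mono) blast
  have sub2: "((dcorr T)\<inverse>)\<^sup>* \<subseteq> (dcorr T \<union> (dcorr T)\<inverse>)\<^sup>*" by (rule rtrancl_mono) blast
  have "(R, x) \<in> ((dcorr T)\<inverse>)\<^sup>*" using xR by (simp add: rtrancl_converse)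
  then have Rx: "(R, x) \<in> (dcorr T \<union> (dcorr T)\<inverse>)\<^sup>*" using sub2 by blast
  have yx: "(y, x) \<in> (dcorr T \<union> (dcorr T)\<inverse>)\<^sup>*" using yR sub Rx by (meson rtrancl_trans subsetD)
  have sxx: "samefam T (b,True,i,[]) x" unfolding samefam_def using occx x_def by simp
  have syx: "samefam T (b@[0],False,kx,[0,1,0]) x" unfolding samefam_def using occy yx y_def by simp
  have "(x, x) \<in> prec T" unfolding prec_def using st(1) st(2) sxx syx by blast
  then have "(x, x) \<in> (prec T)\<^sup>+" by blast
  then show False using pc unfolding pcf_def by blast
qed

end
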